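(* Let $G=(V,E)$ be a locally finite, connected, infinite graph. Then $p_{\mathrm{cut,E}}\le p_{\mathrm{cut,V}}$. If moreover $G$ has bounded degree, then $p_{\mathrm{cut,E}}=p_{\mathrm{cut,V}}$.
   Context: Fix a vertex $x$ (the thresholds do not depend on $x$). Consider Bernoulli$(p)$ bond percolation on $G$ (each edge open independently with probability $p$), with law $\mathbb{P}_p$, expectation $\mathbb{E}_p$, and open cluster $C(x)$ of $x$. A vertex cutset separating $x$ from infinity is a set $\Pi_V\subset V$ such that the connected component of $x$ in $G$ with the vertices of $\Pi_V$ deleted is finite; an edge cutset is a set $\Pi_E\subset E$ such that the component of $x$ in $G$ with the edges of $\Pi_E$ deleted is finite. Define $p_{\mathrm{cut,E}}=\sup\{p\ge0:\inf_{\Pi_E}\mathbb{E}_p[|C(x)\cap\Pi_E|]=0\}$, where $C(x)\cap\Pi_E$ is the set of edges of $C(x)$ lying in $\Pi_E$ and the infimum is over all edge cutsets separating $x$ from infinity, and $p_{\mathrm{cut,V}}=\sup\{p\ge0:\inf_{\Pi_V}\mathbb{E}_p[|C(x)\cap\Pi_V|]=0\}$, where $C(x)\cap\Pi_V$ is the set of vertices of $C(x)$ in $\Pi_V$ and the infimum is over all vertex cutsets separating $x$ from infinity. *)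

theory Defs
  imports "HOL-Probability.Probability"
begin

definition graph :: "'a set \<Rightarrow> 'a set set \<Rightarrow> bool" where
  "graph V E \<longleftrightarrow> (\<forall>e\<in>E. \<exists>u v. u \<noteq> v \<and> u \<in> V \<and> v \<in> V \<and> e = {u, v})"

definition adj :: "'a set set \<Rightarrow> ('a \<times> 'a) set" where
  "adj E = {(u, v). {u, v} \<in> E}"

definition component :: "'a set set \<Rightarrow> 'a \<Rightarrow> 'a set" where
  "component E x = {y. (x, y) \<in> (adj E)\<^sup>*}"

definition locally_finite :: "'a set \<Rightarrow> 'a set set \<Rightarrow> bool" where
  "locally_finite V E \<longleftrightarrow> (\<forall>v\<in>V. finite {e\<in>E. v \<in> e})"

definition connected_graph :: "'a set \<Rightarrow> 'a set set \<Rightarrow> bool" where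
  "connected_graph V E \<longleftrightarrow> (\<forall>u\<in>V. \<forall>v\<in>V. (u, v) \<in> (adj E)\<^sup>*)"

definition bounded_degree :: "'a set \<Rightarrow> 'a set set \<Rightarrow> bool" where
  "bounded_degree V E \<longleftrightarrow> (\<exists>d::nat. \<forall>v\<in>V. finite {e\<in>E. v \<in> e} \<and> card {e\<in>E. v \<in> e} \<le> d)"

definition open_edges :: "'a set set \<Rightarrow> ('a set \<Rightarrow> bool) \<Rightarrow> 'a set set" where
  "open_edges E \<omega> = {e\<in>E. \<omega> e}"

definition cluster :: "'a set set \<Rightarrow> ('a set \<Rightarrow> bool) \<Rightarrow> 'a \<Rightarrow> 'a set" where
  "cluster E \<omega> x = component (open_edges E \<omega>) x"

definition cluster_edges :: "'a set set \<Rightarrow> ('a set \<Rightarrow> bool) \<Rightarrow> 'a \<Rightarrow> 'a set set" where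
  "cluster_edges E \<omega> x = {e \<in> open_edges E \<omega>. e \<subseteq> cluster E \<omega> x}"

definition perc :: "'a set set \<Rightarrow> real \<Rightarrow> ('a set \<Rightarrow> bool) measure" where
  "perc E p = PiM E (\<lambda>_. measure_pmf (bernoulli_pmf p))"

definition ecard :: "'b set \<Rightarrow> ennreal" where
  "ecard A = (if finite A then of_nat (card A) else \<infinity>)"

definition edge_cutset :: "'a set set \<Rightarrow> 'a \<Rightarrow> 'a set set \<Rightarrow> bool" where
  "edge_cutset E x P \<longleftrightarrow> P \<subseteq> E \<and> finite (component (E - P) x)"

definition vertex_deleted_component :: "'a set set \<Rightarrow> 'a set \<Rightarrow> 'a \<Rightarrow> 'a set" where
  "vertex_deleted_component E P x =
     (if x \<in> P then {} else component {e\<in>E. e \<inter> P = {}} x)"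

definition vertex_cutset :: "'a set \<Rightarrow> 'a set set \<Rightarrow> 'a \<Rightarrow> 'a set \<Rightarrow> bool" where
  "vertex_cutset V E x P \<longleftrightarrow> P \<subseteq> V \<and> finite (vertex_deleted_component E P x)"

definition p_cut_E :: "'a set set \<Rightarrow> 'a \<Rightarrow> real" where
  "p_cut_E E x = Sup {p. 0 \<le> p \<and> p \<le> 1 \<and>
     (INF P\<in>{P. edge_cutset E x P}.
        \<integral>\<^sup>+ \<omega>. ecard (cluster_edges E \<omega> x \<inter> P) \<partial>perc E p) = 0}"

definition p_cut_V :: "'a set \<Rightarrow> 'a set set \<Rightarrow> 'a \<Rightarrow> real" where
  "p_cut_V V E x = Sup {p. 0 \<le> p \<and> p \<le> 1 \<and>
     (INF P\<in>{P. vertex_cutset V E x P}.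
        \<integral>\<^sup>+ \<omega>. ecard (cluster E \<omega> x \<inter> P) \<partial>perc E p) = 0}"

end

theory Submission
  imports Defs
begin

lemma adj_mono: "S \<subseteq> T \<Longrightarrow> adj S \<subseteq> adj T"
  unfolding adj_def by auto

lemma component_mono: "S \<subseteq> T \<Longrightarrow> component S x \<subseteq> component T x"
  unfolding component_def using rtrancl_mono[OF adj_mono] by blast

lemma component_finite_sub:
  assumes "y \<in> component S x"
  shows "\<exists>F. finite F \<and> F \<subseteq> S \<and> y \<in> component F x"
proof -
  have "(x, y) \<in> (adj S)\<^sup>*" using assms unfolding component_def by simp
  then show ?thesis
  proof (induction rule: rtrancl_induct)
    case base
    then show ?case by (intro exI[of _ "{}"]) (auto simp: component_def)
  next
    case (step y z)
    then obtain F where F: "finite F" "F \<subseteq> S" "y \<in> component F x" by blast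
    have e: "{y, z} \<in> S" using step(2) by (simp add: adj_def)
    have "(x, y) \<in> (adj (insert {y, z} F))\<^sup>*"
      using F(3) component_mono[of F "insert {y,z} F" x] unfolding component_def by auto
    moreover have "(y, z) \<in> adj (insert {y, z} F)" by (simp add: adj_def)
    ultimately have "(x, z) \<in> (adj (insert {y, z} F))\<^sup>*" by (rule rtrancl_into_rtrancl)
    then show ?case using F e by (intro exI[of _ "insert {y,z} F"]) (auto simp: component_def)
  qed
qed

lemma cluster_iff:
  "y \<in> cluster F \<omega> x \<longleftrightarrow> (\<exists>G. finite G \<and> G \<subseteq> F \<and> (\<forall>e\<in>G. \<omega> e) \<and> y \<in> component G x)"
proof
  assume "y \<in> cluster F \<omega> x"
  then have "y \<in> component (open_edges F \<omega>) x" by (simp add: cluster_def)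
  then obtain G where G: "finite G" "G \<subseteq> open_edges F \<omega>" "y \<in> component G x"
    using component_finite_sub by metis
  have "G \<subseteq> F" "\<forall>e\<in>G. \<omega> e" using G(2) unfolding open_edges_def by blast+
  then show "\<exists>G. finite G \<and> G \<subseteq> F \<and> (\<forall>e\<in>G. \<omega> e) \<and> y \<in> component G x"
    using G by blast
next
  assume "\<exists>G. finite G \<and> G \<subseteq> F \<and> (\<forall>e\<in>G. \<omega> e) \<and> y \<in> component G x"
  then obtain G where G: "G \<subseteq> F" "\<forall>e\<in>G. \<omega> e" "y \<in> component G x"
    by blast
  have "G \<subseteq> open_edges F \<omega>" using G(1,2) unfolding open_edges_def by blast
  then have "component G x \<subseteq> component (open_edges F \<omega>) x" by (rule component_mono)
  then show "y \<in> cluster F \<omega> x" unfolding cluster_def using G(3) by blast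
qed

abbreviation "Mb p \<equiv> measure_pmf (bernoulli_pmf p)"

lemma pred_coord:
  assumes "e \<in> E"
  shows "{\<omega> \<in> space (perc E p). \<omega> e} \<in> sets (perc E p)"
proof -
  have "(\<lambda>\<omega>. \<omega> e) \<in> measurable (perc E p) (Mb p)"
    unfolding perc_def using assms by (rule measurable_component_singleton)
  then have "(\<lambda>\<omega>. \<omega> e) \<in> measurable (perc E p) (count_space UNIV)"
    by (simp add: measurable_cong_sets[OF refl sets_measure_pmf_count_space])
  then have "(\<lambda>\<omega>. \<omega> e) -` {True} \<inter> space (perc E p) \<in> sets (perc E p)"
    by (rule measurable_sets) simp
  moreover have "(\<lambda>\<omega>. \<omega> e) -` {True} \<inter> space (perc E p) = {\<omega> \<in> space (perc E p). \<omega> e}"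
    by auto
  ultimately show ?thesis by simp
qed

lemma meas_cluster:
  assumes "countable E" "F \<subseteq> E"
  shows "{\<omega> \<in> space (perc E p). y \<in> cluster F \<omega> x} \<in> sets (perc E p)"
proof -
  let ?G = "{G. finite G \<and> G \<subseteq> F \<and> y \<in> component G x}"
  have cG: "countable ?G"
    by (rule countable_subset[OF _ countable_Collect_finite_subset[OF countable_subset[OF assms(2) assms(1)]]]) auto
  have eq: "{\<omega> \<in> space (perc E p). y \<in> cluster F \<omega> x} =
     (\<Union>G\<in>?G. {\<omega> \<in> space (perc E p). \<forall>e\<in>G. \<omega> e})"
    unfolding cluster_iff by auto
  have "{\<omega> \<in> space (perc E p). \<forall>e\<in>G. \<omega> e} \<in> sets (perc E p)" if "G \<in> ?G" for G
    using that assms(2) by (intro sets.sets_Collect_finite_All) (auto intro!: pred_coord)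
  then show ?thesis unfolding eq by (intro sets.countable_UN'[OF cG]) auto
qed

lemma edges_sub: "graph V E \<Longrightarrow> e \<in> E \<Longrightarrow> e \<subseteq> V"
  unfolding graph_def by fastforce

lemma edge_nbrs_finite:
  assumes "graph V E" "locally_finite V E"
  shows "finite {e\<in>E. z \<in> e}"
proof (cases "z \<in> V")
  case True then show ?thesis using assms(2) unfolding locally_finite_def by blast
next
  case False
  have "{e\<in>E. z \<in> e} = {}" using edges_sub[OF assms(1)] False by blast
  then show ?thesis by (metis finite.emptyI)
qed

lemma edges_finite: "graph V E \<Longrightarrow> e \<in> E \<Longrightarrow> finite e"
  unfolding graph_def by auto

lemma nbrs_finite:
  assumes "graph V E" "locally_finite V E"
  shows "finite {y. (z, y) \<in> adj E}"
proof -
  have "{y. (z, y) \<in> adj E} \<subseteq> \<Union>{e\<in>E. z \<in> e}" unfolding adj_def by auto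
  moreover have "finite (\<Union>{e\<in>E. z \<in> e})"
    using edge_nbrs_finite[OF assms] edges_finite[OF assms(1)] by (intro finite_Union) auto
  ultimately show ?thesis by (rule finite_subset)
qed

lemma countable_graph:
  assumes "graph V E" "locally_finite V E" "connected_graph V E" "x \<in> V"
  shows "countable V" "countable E"
proof -
  have fin: "finite {y. (x, y) \<in> (adj E) ^^ n}" for n
  proof (induction n)
    case 0 then show ?case by simp
  next
    case (Suc n)
    have "{y. (x, y) \<in> (adj E) ^^ Suc n} = (\<Union>z\<in>{y. (x, y) \<in> (adj E) ^^ n}. {y. (z, y) \<in> adj E})"
      by (auto simp del: relpow.simps simp add: relpow.simps(2))
    then show ?case using Suc nbrs_finite[OF assms(1,2)] by simp
  qed
  have "component E x = (\<Union>n. {y. (x, y) \<in> (adj E) ^^ n})"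
    unfolding component_def rtrancl_is_UN_relpow by auto
  then have cc: "countable (component E x)"
    using fin by (simp add: countable_finite)
  have "V \<subseteq> component E x" using assms(3,4) unfolding connected_graph_def component_def by auto
  then show cV: "countable V" using cc by (rule countable_subset)
  have "E \<subseteq> (\<Union>v\<in>V. {e\<in>E. v \<in> e})"
  proof
    fix e assume "e \<in> E"
    then obtain u v where "u \<in> V" "e = {u, v}" using assms(1) unfolding graph_def by blast
    then show "e \<in> (\<Union>v\<in>V. {e\<in>E. v \<in> e})" using \<open>e \<in> E\<close> by blast
  qed
  moreover have "countable (\<Union>v\<in>V. {e\<in>E. v \<in> e})"
    using cV edge_nbrs_finite[OF assms(1,2)] by (intro countable_UN) (auto simp: countable_finite)
  ultimately show "countable E" by (rule countable_subset)
qed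

lemma meas_cluster_ind:
  assumes "countable E" "F \<subseteq> E"
  shows "(\<lambda>\<omega>. indicator {\<omega>. y \<in> cluster F \<omega> x} \<omega> :: ennreal) \<in> borel_measurable (perc E p)"
proof -
  show ?thesis
    by (rule measurable_cong[THEN iffD2, OF _ borel_measurable_indicator[OF meas_cluster[OF assms]]])
      (simp add: indicator_def)
qed

lemma meas_edge:
  assumes "countable E" "e \<in> E" "finite e"
  shows "{\<omega> \<in> space (perc E p). e \<in> cluster_edges E \<omega> x} \<in> sets (perc E p)"
proof -
  have eq: "{\<omega> \<in> space (perc E p). e \<in> cluster_edges E \<omega> x} =
    {\<omega> \<in> space (perc E p). \<omega> e} \<inter> {\<omega> \<in> space (perc E p). \<forall>y\<in>e. y \<in> cluster E \<omega> x}"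
    using assms(2) by (auto simp: cluster_edges_def open_edges_def)
  show ?thesis unfolding eq
    using assms by (intro sets.Int pred_coord sets.sets_Collect_finite_All meas_cluster) auto
qed

lemma indep:
  fixes k :: "('a set \<Rightarrow> bool) \<Rightarrow> ennreal"
  assumes p: "0 \<le> p" "p \<le> 1" and eE: "e \<in> E"
    and km: "k \<in> borel_measurable (perc E p)"
    and kinv: "\<And>w b. k (w(e := b)) = k w"
  shows "(\<integral>\<^sup>+\<omega>. indicator {\<omega>\<in>space (perc E p). \<omega> e} \<omega> * k \<omega> \<partial>perc E p)
         = ennreal p * (\<integral>\<^sup>+\<omega>. k \<omega> \<partial>perc E p)"
proof -
  let ?I = "E - {e}"
  let ?M = "\<lambda>_::'a set. Mb p"
  have E: "insert e ?I = E" using eE by auto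
  have D: "distr (Mb p \<Otimes>\<^sub>M PiM ?I ?M) (PiM E ?M) (\<lambda>(b, X). X(e := b)) = PiM E ?M"
    using distr_pair_PiM_eq_PiM[of ?I ?M e] unfolding E by (simp add: prob_space_measure_pmf)
  have D': "distr (Mb p \<Otimes>\<^sub>M PiM ?I ?M) (PiM E ?M) (\<lambda>z. (snd z)(e := fst z)) = PiM E ?M"
    using D by (simp add: split_beta')
  have T: "(\<lambda>z. (snd z)(e := fst z)) \<in> measurable (Mb p \<Otimes>\<^sub>M PiM ?I ?M) (PiM E ?M)"
    by (rule measurable_fun_upd[where J="?I"]) (use eE in auto)
  have sf: "sigma_finite_measure (PiM ?I ?M)"
    by (intro prob_space_imp_sigma_finite prob_space_PiM prob_space_measure_pmf)
  have int_eq: "(\<integral>\<^sup>+\<omega>. g \<omega> \<partial>perc E p) = (\<integral>\<^sup>+b. \<integral>\<^sup>+X. g (X(e:=b)) \<partial>PiM ?I ?M \<partial>Mb p)"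
    if g: "g \<in> borel_measurable (perc E p)" for g
  proof -
    have g': "g \<in> borel_measurable (PiM E ?M)" using g by (simp add: perc_def)
    have "(\<integral>\<^sup>+\<omega>. g \<omega> \<partial>perc E p) = integral\<^sup>N (distr (Mb p \<Otimes>\<^sub>M PiM ?I ?M) (PiM E ?M) (\<lambda>z. (snd z)(e := fst z))) g"
      by (simp add: D' perc_def)
    also have "\<dots> = (\<integral>\<^sup>+z. g ((snd z)(e := fst z)) \<partial>(Mb p \<Otimes>\<^sub>M PiM ?I ?M))"
      by (rule nn_integral_distr[OF T]) (simp add: g')
    also have "\<dots> = (\<integral>\<^sup>+b. \<integral>\<^sup>+X. g (X(e:=b)) \<partial>PiM ?I ?M \<partial>Mb p)"
      using sigma_finite_measure.nn_integral_fst[OF sf, of "\<lambda>z. g ((snd z)(e := fst z))" "Mb p"]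
        measurable_comp[OF T g'] by (simp add: comp_def)
    finally show ?thesis .
  qed
  define C where "C = (\<integral>\<^sup>+X. k (X(e:=False)) \<partial>PiM ?I ?M)"
  have inner_k: "(\<integral>\<^sup>+X. k (X(e:=b)) \<partial>PiM ?I ?M) = C" for b
    unfolding C_def by (metis kinv)
  have sp: "X(e := b) \<in> space (perc E p)" if "X \<in> space (PiM ?I ?M)" for X b
    using that PiE_fun_upd[of b "\<lambda>_. UNIV" e X ?I] E by (simp add: perc_def space_PiM)
  have inner_g: "(\<integral>\<^sup>+X. indicator {\<omega>\<in>space (perc E p). \<omega> e} (X(e:=b)) * k (X(e:=b)) \<partial>PiM ?I ?M)
     = C * indicator {True} b" for b
  proof -
    have "(\<integral>\<^sup>+X. indicator {\<omega>\<in>space (perc E p). \<omega> e} (X(e:=b)) * k (X(e:=b)) \<partial>PiM ?I ?M)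
       = (\<integral>\<^sup>+X. indicator {True} b * k (X(e:=b)) \<partial>PiM ?I ?M)"
      by (intro nn_integral_cong) (use sp in \<open>auto simp: indicator_def\<close>)
    also have "\<dots> = C * indicator {True} b"
      using inner_k[of b] by (cases b) auto
    finally show ?thesis .
  qed
  have gm: "(\<lambda>\<omega>. indicator {\<omega>\<in>space (perc E p). \<omega> e} \<omega> * k \<omega>) \<in> borel_measurable (perc E p)"
    using km pred_coord[OF eE, of p] by measurable
  have "(\<integral>\<^sup>+\<omega>. indicator {\<omega>\<in>space (perc E p). \<omega> e} \<omega> * k \<omega> \<partial>perc E p)
     = (\<integral>\<^sup>+b. C * indicator {True} b \<partial>Mb p)"
    by (simp add: int_eq[OF gm] inner_g)
  also have "\<dots> = C * ennreal p"
    using p by (simp add: emeasure_pmf_single)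
  finally have L: "(\<integral>\<^sup>+\<omega>. indicator {\<omega>\<in>space (perc E p). \<omega> e} \<omega> * k \<omega> \<partial>perc E p) = C * ennreal p" .
  have "(\<integral>\<^sup>+\<omega>. k \<omega> \<partial>perc E p) = (\<integral>\<^sup>+b. C \<partial>Mb p)"
    by (simp add: int_eq[OF km] inner_k)
  also have "\<dots> = C"
    by (simp add: measure_pmf.emeasure_space_1)
  finally show ?thesis using L by (simp add: mult.commute)
qed

lemma comp_step: "y \<in> component S x \<Longrightarrow> {y, z} \<in> S \<Longrightarrow> z \<in> component S x"
  unfolding component_def adj_def by (auto intro: rtrancl_into_rtrancl)

lemma vertex_edge:
  assumes cE: "countable E" and p: "0 < p" "p \<le> 1" and eE: "e \<in> E" and e: "e = {u, v}"
  shows "ennreal p * emeasure (perc E p) {\<omega>\<in>space (perc E p). u \<in> cluster E \<omega> x}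
    \<le> ennreal (p + 1) * emeasure (perc E p) {\<omega>\<in>space (perc E p). e \<in> cluster_edges E \<omega> x}"
proof -
  let ?P = "perc E p"
  define A where "A = {\<omega>\<in>space ?P. u \<in> cluster E \<omega> x}"
  define B where "B = {\<omega>\<in>space ?P. e \<in> cluster_edges E \<omega> x}"
  define k where "k = (\<lambda>\<omega>. indicator {\<omega>. u \<in> cluster (E - {e}) \<omega> x} \<omega> :: ennreal)"
  have Am: "A \<in> sets ?P" unfolding A_def using meas_cluster[OF cE, of E] by simp
  have Bm: "B \<in> sets ?P" unfolding B_def using meas_edge[OF cE eE] e by simp
  have km: "k \<in> borel_measurable ?P" unfolding k_def by (rule meas_cluster_ind[OF cE]) auto
  have oe: "open_edges (E - {e}) (w(e := b)) = open_edges (E - {e}) w" for w b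
    unfolding open_edges_def by auto
  have kinv: "k (w(e := b)) = k w" for w b
    unfolding k_def indicator_def cluster_def using oe by simp
  have key: "e \<in> cluster_edges E \<omega> x" if "\<omega> e" "u \<in> cluster E \<omega> x" for \<omega>
  proof -
    have eo: "e \<in> open_edges E \<omega>" using that eE by (simp add: open_edges_def)
    have "v \<in> cluster E \<omega> x" using that(2) eo e comp_step unfolding cluster_def by metis
    then show ?thesis using eo e that(2) by (simp add: cluster_edges_def)
  qed
  have mono_c: "cluster (E - {e}) \<omega> x \<subseteq> cluster E \<omega> x" for \<omega>
    unfolding cluster_def by (rule component_mono) (auto simp: open_edges_def)
  have a: "indicator A \<omega> \<le> indicator B \<omega> + k \<omega>" if "\<omega> \<in> space ?P" for \<omega>
  proof (cases "u \<in> cluster E \<omega> x")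
    case True
    show ?thesis
    proof (cases "\<omega> e")
      case True
      then have "\<omega> \<in> B" using key \<open>u \<in> cluster E \<omega> x\<close> that by (simp add: B_def)
      then show ?thesis by (simp add: indicator_def)
    next
      case False
      then have "open_edges E \<omega> = open_edges (E - {e}) \<omega>" by (auto simp: open_edges_def)
      then have "k \<omega> = 1" using \<open>u \<in> cluster E \<omega> x\<close> by (simp add: k_def cluster_def)
      then show ?thesis by (simp add: indicator_def)
    qed
  next
    case False
    then show ?thesis by (simp add: A_def indicator_def)
  qed
  have b: "indicator {\<omega>\<in>space ?P. \<omega> e} \<omega> * k \<omega> \<le> indicator B \<omega>" if "\<omega> \<in> space ?P" for \<omega>
  proof (cases "\<omega> e \<and> u \<in> cluster (E - {e}) \<omega> x")
    case True
    then have "\<omega> \<in> B" using key mono_c that by (auto simp: B_def)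
    then show ?thesis by (simp add: indicator_def k_def)
  next
    case False
    then show ?thesis by (auto simp: indicator_def k_def)
  qed
  have I1: "emeasure ?P A \<le> emeasure ?P B + (\<integral>\<^sup>+\<omega>. k \<omega> \<partial>?P)"
  proof -
    have "emeasure ?P A = (\<integral>\<^sup>+\<omega>. indicator A \<omega> \<partial>?P)" using Am by simp
    also have "\<dots> \<le> (\<integral>\<^sup>+\<omega>. indicator B \<omega> + k \<omega> \<partial>?P)"
      by (intro nn_integral_mono a)
    also have "\<dots> = (\<integral>\<^sup>+\<omega>. indicator B \<omega> \<partial>?P) + (\<integral>\<^sup>+\<omega>. k \<omega> \<partial>?P)"
      using Bm km by (intro nn_integral_add) auto
    finally show ?thesis using Bm by simp
  qed
  have I2: "ennreal p * (\<integral>\<^sup>+\<omega>. k \<omega> \<partial>?P) \<le> emeasure ?P B"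
  proof -
    have "ennreal p * (\<integral>\<^sup>+\<omega>. k \<omega> \<partial>?P) = (\<integral>\<^sup>+\<omega>. indicator {\<omega>\<in>space ?P. \<omega> e} \<omega> * k \<omega> \<partial>?P)"
      using indep[OF less_imp_le[OF p(1)] p(2) eE km kinv] by simp
    also have "\<dots> \<le> (\<integral>\<^sup>+\<omega>. indicator B \<omega> \<partial>?P)"
      by (intro nn_integral_mono b)
    finally show ?thesis using Bm by simp
  qed
  have "ennreal p * emeasure ?P A \<le> ennreal p * emeasure ?P B + ennreal p * (\<integral>\<^sup>+\<omega>. k \<omega> \<partial>?P)"
    using mult_left_mono[OF I1, of "ennreal p"] by (simp add: distrib_left)
  also have "\<dots> \<le> ennreal p * emeasure ?P B + emeasure ?P B"
    using I2 by (rule add_left_mono)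
  also have "\<dots> = ennreal (p + 1) * emeasure ?P B"
    using p by (simp add: ennreal_plus distrib_right)
  finally show ?thesis unfolding A_def B_def .
qed

lemma ecard_cs: "ecard (S \<inter> P) = (\<integral>\<^sup>+y. indicator S y \<partial>count_space P)"
proof -
  have "(\<integral>\<^sup>+y. indicator S y \<partial>count_space P) = (\<integral>\<^sup>+y. indicator (S \<inter> P) y \<partial>count_space P)"
    by (intro nn_integral_cong) (auto simp: indicator_def)
  also have "\<dots> = emeasure (count_space P) (S \<inter> P)"
    by (intro nn_integral_indicator) auto
  also have "\<dots> = ecard (S \<inter> P)"
    by (subst emeasure_count_space) (auto simp: ecard_def)
  finally show ?thesis by simp
qed

lemma exp_ecard:
  assumes "countable P" "\<And>y. y \<in> P \<Longrightarrow> {\<omega>\<in>space M. y \<in> S \<omega>} \<in> sets M"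
  shows "(\<integral>\<^sup>+\<omega>. ecard (S \<omega> \<inter> P) \<partial>M) = (\<integral>\<^sup>+y. emeasure M {\<omega>\<in>space M. y \<in> S \<omega>} \<partial>count_space P)"
proof -
  have "(\<integral>\<^sup>+\<omega>. ecard (S \<omega> \<inter> P) \<partial>M) = (\<integral>\<^sup>+\<omega>. \<integral>\<^sup>+y. indicator {\<omega>\<in>space M. y \<in> S \<omega>} \<omega> \<partial>count_space P \<partial>M)"
    by (intro nn_integral_cong) (auto simp: ecard_cs indicator_def)
  also have "\<dots> = (\<integral>\<^sup>+y. \<integral>\<^sup>+\<omega>. indicator {\<omega>\<in>space M. y \<in> S \<omega>} \<omega> \<partial>M \<partial>count_space P)"
    using assms by (intro nn_integral_count_space_nn_integral) auto
  also have "\<dots> = (\<integral>\<^sup>+y. emeasure M {\<omega>\<in>space M. y \<in> S \<omega>} \<partial>count_space P)"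
    using assms(2) by (intro nn_integral_cong) simp
  finally show ?thesis .
qed

lemma exp_ecard_c:
  assumes "countable P" "\<And>y. y \<in> P \<Longrightarrow> {\<omega>\<in>space M. y \<in> S \<omega>} \<in> sets M"
  shows "(\<integral>\<^sup>+\<omega>. c * ecard (S \<omega> \<inter> P) \<partial>M) = c * (\<integral>\<^sup>+y. emeasure M {\<omega>\<in>space M. y \<in> S \<omega>} \<partial>count_space P)"
proof -
  have "(\<integral>\<^sup>+\<omega>. c * ecard (S \<omega> \<inter> P) \<partial>M) = (\<integral>\<^sup>+\<omega>. \<integral>\<^sup>+y. c * indicator {\<omega>\<in>space M. y \<in> S \<omega>} \<omega> \<partial>count_space P \<partial>M)"
  proof (intro nn_integral_cong)
    fix \<omega> assume "\<omega> \<in> space M"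
    then have "(\<integral>\<^sup>+y. c * indicator {\<omega>\<in>space M. y \<in> S \<omega>} \<omega> \<partial>count_space P)
        = (\<integral>\<^sup>+y. c * indicator (S \<omega>) y \<partial>count_space P)"
      by (intro nn_integral_cong) (auto simp: indicator_def)
    also have "\<dots> = c * ecard (S \<omega> \<inter> P)"
      by (subst nn_integral_cmult) (auto simp: ecard_cs)
    finally show "c * ecard (S \<omega> \<inter> P) = (\<integral>\<^sup>+y. c * indicator {\<omega>\<in>space M. y \<in> S \<omega>} \<omega> \<partial>count_space P)"
      by simp
  qed
  also have "\<dots> = (\<integral>\<^sup>+y. \<integral>\<^sup>+\<omega>. c * indicator {\<omega>\<in>space M. y \<in> S \<omega>} \<omega> \<partial>M \<partial>count_space P)"
    using assms by (intro nn_integral_count_space_nn_integral) auto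
  also have "\<dots> = (\<integral>\<^sup>+y. c * emeasure M {\<omega>\<in>space M. y \<in> S \<omega>} \<partial>count_space P)"
    using assms(2) by (intro nn_integral_cong) (simp add: nn_integral_cmult_indicator)
  also have "\<dots> = c * (\<integral>\<^sup>+y. emeasure M {\<omega>\<in>space M. y \<in> S \<omega>} \<partial>count_space P)"
    by (rule nn_integral_cmult) simp
  finally show ?thesis .
qed

lemma AE_closed:
  assumes "countable E"
  shows "AE \<omega> in perc E 0. \<forall>e\<in>E. \<not> \<omega> e"
proof -
  have "AE b in Mb 0. \<not> b"
    unfolding AE_measure_pmf_iff by (auto simp: set_pmf_iff)
  then have "\<forall>e\<in>E. AE \<omega> in perc E 0. \<not> \<omega> e"
    unfolding perc_def by (auto intro!: AE_PiM_component prob_space_measure_pmf)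
  then show ?thesis by (subst AE_ball_countable[OF assms])
qed

lemma all_closed:
  assumes "\<forall>e\<in>E. \<not> \<omega> e"
  shows "cluster E \<omega> x = {x}" "cluster_edges E \<omega> x = {}"
proof -
  have "open_edges E \<omega> = {}" using assms by (auto simp: open_edges_def)
  then show "cluster E \<omega> x = {x}" "cluster_edges E \<omega> x = {}"
    by (auto simp: cluster_def cluster_edges_def component_def adj_def)
qed

lemma comp_single:
  assumes "\<And>z. {x, z} \<in> S \<Longrightarrow> z = x"
  shows "component S x \<subseteq> {x}"
proof
  fix y assume "y \<in> component S x"
  then have "(x, y) \<in> (adj S)\<^sup>*" by (simp add: component_def)
  then show "y \<in> {x}"
  proof (induction rule: rtrancl_induct)
    case base then show ?case by simp
  next
    case (step y z)
    then have "{x, z} \<in> S" by (simp add: adj_def)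
    then show ?case using assms by simp
  qed
qed

lemma L0E:
  assumes "countable E"
  shows "(INF P\<in>{P. edge_cutset E x P}. \<integral>\<^sup>+ \<omega>. ecard (cluster_edges E \<omega> x \<inter> P) \<partial>perc E 0) = 0"
proof -
  let ?P = "{e\<in>E. x \<in> e}"
  have "component (E - ?P) x \<subseteq> {x}" by (rule comp_single) auto
  then have cut: "edge_cutset E x ?P" unfolding edge_cutset_def by (auto intro: finite_subset)
  have "(\<integral>\<^sup>+ \<omega>. ecard (cluster_edges E \<omega> x \<inter> ?P) \<partial>perc E 0) = (\<integral>\<^sup>+ \<omega>. 0 \<partial>perc E 0)"
    using AE_closed[OF assms] by (intro nn_integral_cong_AE) (auto simp: all_closed ecard_def)
  moreover have "(INF P\<in>{P. edge_cutset E x P}. \<integral>\<^sup>+ \<omega>. ecard (cluster_edges E \<omega> x \<inter> P) \<partial>perc E 0) \<le> (\<integral>\<^sup>+ \<omega>. ecard (cluster_edges E \<omega> x \<inter> ?P) \<partial>perc E 0)"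
    by (rule INF_lower) (use cut in simp)
  ultimately show ?thesis by simp
qed

lemma L0V:
  assumes "countable E" "graph V E"
  shows "(INF P\<in>{P. vertex_cutset V E x P}. \<integral>\<^sup>+ \<omega>. ecard (cluster E \<omega> x \<inter> P) \<partial>perc E 0) = 0"
proof -
  let ?P = "{v. v \<noteq> x \<and> {x, v} \<in> E}"
  have "?P \<subseteq> V" using edges_sub[OF assms(2)] by blast
  moreover have "component {e\<in>E. e \<inter> ?P = {}} x \<subseteq> {x}" by (rule comp_single) auto
  ultimately have cut: "vertex_cutset V E x ?P"
    unfolding vertex_cutset_def vertex_deleted_component_def by (auto intro: finite_subset)
  have "(\<integral>\<^sup>+ \<omega>. ecard (cluster E \<omega> x \<inter> ?P) \<partial>perc E 0) = (\<integral>\<^sup>+ \<omega>. 0 \<partial>perc E 0)"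
    using AE_closed[OF assms(1)] by (intro nn_integral_cong_AE) (auto simp: all_closed ecard_def)
  moreover have "(INF P\<in>{P. vertex_cutset V E x P}. \<integral>\<^sup>+ \<omega>. ecard (cluster E \<omega> x \<inter> P) \<partial>perc E 0) \<le> (\<integral>\<^sup>+ \<omega>. ecard (cluster E \<omega> x \<inter> ?P) \<partial>perc E 0)"
    by (rule INF_lower) (use cut in simp)
  ultimately show ?thesis by simp
qed

lemma L1core:
  assumes g: "graph V E" and cV: "countable V" and cE: "countable E" and p: "0 < p" "p \<le> 1"
    and cut: "edge_cutset E x PE"
  shows "\<exists>PV. vertex_cutset V E x PV \<and>
    ennreal p * (\<integral>\<^sup>+\<omega>. ecard (cluster E \<omega> x \<inter> PV) \<partial>perc E p)
      \<le> ennreal (p+1) * (\<integral>\<^sup>+\<omega>. ecard (cluster_edges E \<omega> x \<inter> PE) \<partial>perc E p)"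
proof -
  define K where "K = component (E - PE) x"
  have Kfin: "finite K" using cut by (simp add: edge_cutset_def K_def)
  have PE: "PE \<subseteq> E" using cut by (simp add: edge_cutset_def)
  define PV where "PV = {u\<in>K. \<exists>e\<in>E. u \<in> e \<and> \<not> e \<subseteq> K}"
  have PVV: "PV \<subseteq> V" unfolding PV_def using edges_sub[OF g] by blast
  have vc: "vertex_cutset V E x PV"
  proof -
    have "component {e\<in>E. e \<inter> PV = {}} x \<subseteq> K" if "x \<notin> PV"
    proof
      fix y assume "y \<in> component {e\<in>E. e \<inter> PV = {}} x"
      then have "(x,y) \<in> (adj {e\<in>E. e \<inter> PV = {}})\<^sup>*" by (simp add: component_def)
      then show "y \<in> K"
      proof (induction rule: rtrancl_induct)
        case base then show ?case by (simp add: K_def component_def)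
      next
        case (step y z)
        then have yz: "{y,z} \<in> E" "{y,z} \<inter> PV = {}" by (auto simp: adj_def)
        then have "y \<notin> PV" by blast
        then have "{y,z} \<subseteq> K" using step.IH yz(1) unfolding PV_def by blast
        then show ?case by simp
      qed
    qed
    then show ?thesis using PVV Kfin unfolding vertex_cutset_def vertex_deleted_component_def
      by (auto intro: finite_subset)
  qed
  define gsel where "gsel u = (SOME e. e \<in> E \<and> u \<in> e \<and> \<not> e \<subseteq> K)" for u
  have gs: "gsel u \<in> E \<and> u \<in> gsel u \<and> \<not> gsel u \<subseteq> K" if "u \<in> PV" for u
  proof -
    from that obtain e where "e \<in> E \<and> u \<in> e \<and> \<not> e \<subseteq> K" by (auto simp: PV_def)
    then show ?thesis unfolding gsel_def by (rule someI)
  qed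
  have gK: "u \<in> K" if "u \<in> PV" for u using that by (simp add: PV_def)
  have gw: "\<exists>w. gsel u = {u, w}" if u: "u \<in> PV" for u
  proof -
    obtain a b where ab: "gsel u = {a, b}" using gs[OF u] g unfolding graph_def by blast
    then have "u = a \<or> u = b" using gs[OF u] by auto
    then show ?thesis using ab by (auto simp: insert_commute)
  qed
  have gPE: "gsel u \<in> PE" if u: "u \<in> PV" for u
  proof (rule ccontr)
    assume nin: "gsel u \<notin> PE"
    obtain w where w: "gsel u = {u,w}" using gw u by blast
    then have "{u,w} \<in> E - PE" using gs[OF u] nin by auto
    then have "w \<in> K" using gK[OF u] comp_step unfolding K_def by metis
    then show False using gs[OF u] w gK[OF u] by auto
  qed
  have inj: "inj_on gsel PV"
  proof
    fix u1 u2 assume u: "u1 \<in> PV" "u2 \<in> PV" "gsel u1 = gsel u2"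
    show "u1 = u2"
    proof (rule ccontr)
      assume ne: "u1 \<noteq> u2"
      obtain w where w: "gsel u1 = {u1, w}" using gw u(1) by blast
      have "u2 \<in> {u1, w}" using gs[OF u(2)] u(3) w by simp
      then have "w = u2" using ne by auto
      then have "gsel u1 \<subseteq> K" using w gK u by auto
      then show False using gs[OF u(1)] by simp
    qed
  qed
  let ?P = "perc E p"
  let ?A = "\<lambda>u. emeasure ?P {\<omega>\<in>space ?P. u \<in> cluster E \<omega> x}"
  let ?B = "\<lambda>e. emeasure ?P {\<omega>\<in>space ?P. e \<in> cluster_edges E \<omega> x}"
  have cPV: "countable PV" using cV PVV countable_subset by blast
  have cPE: "countable PE" using cE PE countable_subset by blast
  have fV: "(\<integral>\<^sup>+\<omega>. ecard (cluster E \<omega> x \<inter> PV) \<partial>?P) = (\<integral>\<^sup>+u. ?A u \<partial>count_space PV)"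
    by (rule exp_ecard[OF cPV]) (rule meas_cluster[OF cE], simp)
  have fE: "(\<integral>\<^sup>+\<omega>. ecard (cluster_edges E \<omega> x \<inter> PE) \<partial>?P) = (\<integral>\<^sup>+e. ?B e \<partial>count_space PE)"
    by (rule exp_ecard[OF cPE]) (rule meas_edge[OF cE], use PE edges_finite[OF g] in auto)
  have s1: "ennreal p * (\<integral>\<^sup>+u. ?A u \<partial>count_space PV) \<le> ennreal (p+1) * (\<integral>\<^sup>+u. ?B (gsel u) \<partial>count_space PV)"
  proof -
    have "ennreal p * (\<integral>\<^sup>+u. ?A u \<partial>count_space PV) = (\<integral>\<^sup>+u. ennreal p * ?A u \<partial>count_space PV)"
      by (rule nn_integral_cmult[symmetric]) simp
    also have "\<dots> \<le> (\<integral>\<^sup>+u. ennreal (p+1) * ?B (gsel u) \<partial>count_space PV)"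
    proof (rule nn_integral_mono)
      fix u assume "u \<in> space (count_space PV)"
      then have u: "u \<in> PV" by simp
      obtain w where w: "gsel u = {u, w}" using gw u by blast
      show "ennreal p * ?A u \<le> ennreal (p+1) * ?B (gsel u)"
        by (rule vertex_edge[OF cE p _ w]) (use gs u in auto)
    qed
    also have "\<dots> = ennreal (p+1) * (\<integral>\<^sup>+u. ?B (gsel u) \<partial>count_space PV)"
      by (rule nn_integral_cmult) simp
    finally show ?thesis .
  qed
  have s2: "(\<integral>\<^sup>+u. ?B (gsel u) \<partial>count_space PV) \<le> (\<integral>\<^sup>+e. ?B e \<partial>count_space PE)"
  proof -
    have "(\<integral>\<^sup>+u. ?B (gsel u) \<partial>count_space PV) = (\<integral>\<^sup>+e. ?B e \<partial>count_space (gsel ` PV))"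
      by (rule nn_integral_bij_count_space) (rule bij_betw_imageI[OF inj refl])
    also have "\<dots> \<le> (\<integral>\<^sup>+e. ?B e \<partial>count_space PE)"
    proof -
      have sub: "gsel ` PV \<subseteq> PE" using gPE by auto
      have "(\<integral>\<^sup>+e. ?B e * indicator (gsel ` PV) e \<partial>count_space UNIV) \<le> (\<integral>\<^sup>+e. ?B e * indicator PE e \<partial>count_space UNIV)"
        by (intro nn_integral_mono) (use sub in \<open>auto simp: indicator_def\<close>)
      then show ?thesis by (simp add: nn_integral_count_space_indicator)
    qed
    finally show ?thesis .
  qed
  have "ennreal p * (\<integral>\<^sup>+\<omega>. ecard (cluster E \<omega> x \<inter> PV) \<partial>?P)
      \<le> ennreal (p+1) * (\<integral>\<^sup>+\<omega>. ecard (cluster_edges E \<omega> x \<inter> PE) \<partial>?P)"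
    unfolding fV fE using s1 mult_left_mono[OF s2, of "ennreal (p+1)"] by simp
  then show ?thesis using vc by blast
qed

lemma L1:
  assumes g: "graph V E" and cV: "countable V" and cE: "countable E" and p: "0 < p" "p \<le> 1"
    and z: "(INF P\<in>{P. edge_cutset E x P}. \<integral>\<^sup>+ \<omega>. ecard (cluster_edges E \<omega> x \<inter> P) \<partial>perc E p) = 0"
  shows "(INF P\<in>{P. vertex_cutset V E x P}. \<integral>\<^sup>+ \<omega>. ecard (cluster E \<omega> x \<inter> P) \<partial>perc E p) = 0"
proof -
  let ?FV = "\<lambda>P. \<integral>\<^sup>+ \<omega>. ecard (cluster E \<omega> x \<inter> P) \<partial>perc E p"
  let ?FE = "\<lambda>P. \<integral>\<^sup>+ \<omega>. ecard (cluster_edges E \<omega> x \<inter> P) \<partial>perc E p"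
  have "(INF P\<in>{P. vertex_cutset V E x P}. ?FV P) \<le> 0"
  proof (rule ennreal_le_epsilon)
    fix \<epsilon> :: real assume \<epsilon>: "0 < \<epsilon>"
    define \<delta> where "\<delta> = \<epsilon> * p / (p+1)"
    have \<delta>: "0 < \<delta>" using \<epsilon> p by (simp add: \<delta>_def)
    have "(INF P\<in>{P. edge_cutset E x P}. ?FE P) < ennreal \<delta>" using z \<delta> by simp
    then obtain PE where PE: "edge_cutset E x PE" "?FE PE < ennreal \<delta>" by (auto simp: INF_less_iff)
    obtain PV where PV: "vertex_cutset V E x PV" "ennreal p * ?FV PV \<le> ennreal (p+1) * ?FE PE"
      using L1core[OF g cV cE p PE(1)] by blast
    have "ennreal (p+1) * ?FE PE \<le> ennreal (p+1) * ennreal \<delta>"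
      using PE(2) by (intro mult_left_mono) auto
    also have "\<dots> = ennreal p * ennreal \<epsilon>"
    proof -
      have "(p+1) * \<delta> = p * \<epsilon>" using p by (simp add: \<delta>_def field_simps)
      then show ?thesis using p \<epsilon> \<delta> by (metis ennreal_mult less_imp_le add_nonneg_nonneg zero_le_one)
    qed
    finally have "ennreal p * ?FV PV \<le> ennreal p * ennreal \<epsilon>" using PV(2) by (rule order.trans[rotated])
    then have "?FV PV \<le> ennreal \<epsilon>" using p by (subst (asm) ennreal_mult_le_mult_iff) auto
    moreover have "(INF P\<in>{P. vertex_cutset V E x P}. ?FV P) \<le> ?FV PV"
      by (rule INF_lower) (simp add: PV(1))
    ultimately show "(INF P\<in>{P. vertex_cutset V E x P}. ?FV P) \<le> 0 + ennreal \<epsilon>" by simp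
  qed
  then show ?thesis by simp
qed

lemma ecard_union_bound:
  assumes "A \<subseteq> (\<Union>v\<in>B. D v)" "\<And>v. v \<in> B \<Longrightarrow> finite (D v) \<and> card (D v) \<le> d"
  shows "ecard A \<le> of_nat d * ecard B"
proof (cases "finite B")
  case True
  then have fU: "finite (\<Union>v\<in>B. D v)" using assms(2) by auto
  then have fA: "finite A" using assms(1) finite_subset by blast
  have "card A \<le> card (\<Union>v\<in>B. D v)" by (rule card_mono[OF fU assms(1)])
  also have "\<dots> \<le> (\<Sum>v\<in>B. card (D v))" by (rule card_UN_le[OF True])
  also have "\<dots> \<le> (\<Sum>v\<in>B. d)" using assms(2) by (intro sum_mono) auto
  also have "\<dots> = d * card B" by simp
  finally have "card A \<le> d * card B" .
  then have "(of_nat (card A) :: ennreal) \<le> of_nat (d * card B)" by (rule of_nat_mono)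
  then show ?thesis using fA True by (simp add: ecard_def)
next
  case False
  show ?thesis
  proof (cases "d = 0")
    case True
    then have "A = {}" using assms by fastforce
    then show ?thesis by (simp add: ecard_def)
  next
    case False
    then show ?thesis using \<open>infinite B\<close> by (simp add: ecard_def ennreal_of_nat_eq_real_of_nat ennreal_mult_top)
  qed
qed

lemma L2:
  assumes g: "graph V E" and bd: "bounded_degree V E" and cV: "countable V" and cE: "countable E"
    and z: "(INF P\<in>{P. vertex_cutset V E x P}. \<integral>\<^sup>+ \<omega>. ecard (cluster E \<omega> x \<inter> P) \<partial>perc E p) = 0"
  shows "(INF P\<in>{P. edge_cutset E x P}. \<integral>\<^sup>+ \<omega>. ecard (cluster_edges E \<omega> x \<inter> P) \<partial>perc E p) = 0"
proof -
  let ?FV = "\<lambda>P. \<integral>\<^sup>+ \<omega>. ecard (cluster E \<omega> x \<inter> P) \<partial>perc E p"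
  let ?FE = "\<lambda>P. \<integral>\<^sup>+ \<omega>. ecard (cluster_edges E \<omega> x \<inter> P) \<partial>perc E p"
  obtain d where d: "\<forall>v\<in>V. finite {e\<in>E. v \<in> e} \<and> card {e\<in>E. v \<in> e} \<le> d"
    using bd by (auto simp: bounded_degree_def)
  have main: "(INF P\<in>{P. edge_cutset E x P}. ?FE P) \<le> of_nat d * ?FV PV" if PV: "vertex_cutset V E x PV" for PV
  proof -
    define PE where "PE = {e\<in>E. e \<inter> PV \<noteq> {}}"
    have eq: "E - PE = {e\<in>E. e \<inter> PV = {}}" by (auto simp: PE_def)
    have "finite (component (E - PE) x)"
    proof (cases "x \<in> PV")
      case True
      have "component (E - PE) x \<subseteq> {x}" by (rule comp_single) (use True in \<open>auto simp: eq\<close>)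
      then show ?thesis by (rule finite_subset) simp
    next
      case False
      then show ?thesis using PV eq by (simp add: vertex_cutset_def vertex_deleted_component_def)
    qed
    then have cut: "edge_cutset E x PE" by (simp add: edge_cutset_def PE_def)
    have pw: "ecard (cluster_edges E \<omega> x \<inter> PE) \<le> of_nat d * ecard (cluster E \<omega> x \<inter> PV)" for \<omega>
    proof (rule ecard_union_bound)
      show "cluster_edges E \<omega> x \<inter> PE \<subseteq> (\<Union>v\<in>cluster E \<omega> x \<inter> PV. {e\<in>E. v \<in> e})"
        by (auto simp: cluster_edges_def PE_def open_edges_def)
      show "\<And>v. v \<in> cluster E \<omega> x \<inter> PV \<Longrightarrow> finite {e\<in>E. v \<in> e} \<and> card {e\<in>E. v \<in> e} \<le> d"
        using d PV by (auto simp: vertex_cutset_def)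
    qed
    have cPV: "countable PV" using PV cV countable_subset by (auto simp: vertex_cutset_def)
    have "(INF P\<in>{P. edge_cutset E x P}. ?FE P) \<le> ?FE PE" by (rule INF_lower) (simp add: cut)
    also have "\<dots> \<le> (\<integral>\<^sup>+\<omega>. of_nat d * ecard (cluster E \<omega> x \<inter> PV) \<partial>perc E p)"
      by (intro nn_integral_mono pw)
    also have "\<dots> = of_nat d * (\<integral>\<^sup>+y. emeasure (perc E p) {\<omega>\<in>space (perc E p). y \<in> cluster E \<omega> x} \<partial>count_space PV)"
      by (rule exp_ecard_c[OF cPV]) (rule meas_cluster[OF cE], simp)
    also have "\<dots> = of_nat d * ?FV PV"
      by (subst exp_ecard[OF cPV]) (rule meas_cluster[OF cE], simp_all)
    finally show ?thesis .
  qed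
  have "(INF P\<in>{P. edge_cutset E x P}. ?FE P) \<le> 0"
  proof (rule ennreal_le_epsilon)
    fix \<epsilon> :: real assume \<epsilon>: "0 < \<epsilon>"
    define \<delta> where "\<delta> = \<epsilon> / (real d + 1)"
    have \<delta>: "0 < \<delta>" using \<epsilon> by (simp add: \<delta>_def)
    have "(INF P\<in>{P. vertex_cutset V E x P}. ?FV P) < ennreal \<delta>" using z \<delta> by simp
    then obtain PV where PV: "vertex_cutset V E x PV" "?FV PV < ennreal \<delta>" by (auto simp: INF_less_iff)
    have "(INF P\<in>{P. edge_cutset E x P}. ?FE P) \<le> of_nat d * ?FV PV" by (rule main[OF PV(1)])
    also have "\<dots> \<le> of_nat d * ennreal \<delta>" using PV(2) by (intro mult_left_mono) auto
    also have "\<dots> = ennreal (real d * \<delta>)" using \<delta> by (simp add: ennreal_mult ennreal_of_nat_eq_real_of_nat)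
    also have "\<dots> \<le> ennreal \<epsilon>"
    proof (rule ennreal_leI)
      have "real d * \<delta> \<le> (real d + 1) * \<delta>" using \<delta> by (simp add: algebra_simps)
      also have "\<dots> = \<epsilon>" by (simp add: \<delta>_def)
      finally show "real d * \<delta> \<le> \<epsilon>" .
    qed
    finally show "(INF P\<in>{P. edge_cutset E x P}. ?FE P) \<le> 0 + ennreal \<epsilon>" by simp
  qed
  then show ?thesis by simp
qed

theorem lemma2p1:
  fixes V :: "'a set" and E :: "'a set set" and x :: 'a
  assumes "graph V E" and "locally_finite V E" and "connected_graph V E"
    and "infinite V" and "x \<in> V"
  shows "p_cut_E E x \<le> p_cut_V V E x \<and>
         (bounded_degree V E \<longrightarrow> p_cut_E E x = p_cut_V V E x)"
proof -
  have cV: "countable V" and cE: "countable E"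
    using countable_graph[OF assms(1,2,3,5)] by auto
  define SE where "SE = {p. 0 \<le> p \<and> p \<le> 1 \<and>
     (INF P\<in>{P. edge_cutset E x P}. \<integral>\<^sup>+ \<omega>. ecard (cluster_edges E \<omega> x \<inter> P) \<partial>perc E p) = 0}"
  define SV where "SV = {p. 0 \<le> p \<and> p \<le> 1 \<and>
     (INF P\<in>{P. vertex_cutset V E x P}. \<integral>\<^sup>+ \<omega>. ecard (cluster E \<omega> x \<inter> P) \<partial>perc E p) = 0}"
  have eE: "p_cut_E E x = Sup SE" unfolding p_cut_E_def SE_def ..
  have eV: "p_cut_V V E x = Sup SV" unfolding p_cut_V_def SV_def ..
  have 0: "(0::real) \<in> SE" "(0::real) \<in> SV"
    using L0E[OF cE, of x] L0V[OF cE assms(1), of x] by (auto simp: SE_def SV_def)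
  have bE: "bdd_above SE" by (rule bdd_aboveI[of _ 1]) (auto simp: SE_def)
  have bV: "bdd_above SV" by (rule bdd_aboveI[of _ 1]) (auto simp: SV_def)
  have sub1: "SE \<subseteq> SV"
  proof
    fix p assume p: "p \<in> SE"
    show "p \<in> SV"
    proof (cases "p = 0")
      case True then show ?thesis using 0 by simp
    next
      case False
      then have "0 < p" using p by (simp add: SE_def)
      then show ?thesis using p L1[OF assms(1) cV cE \<open>0 < p\<close>] by (auto simp: SE_def SV_def)
    qed
  qed
  have le: "p_cut_E E x \<le> p_cut_V V E x"
    unfolding eE eV using 0 bV sub1 by (intro cSup_subset_mono) auto
  have eq: "p_cut_E E x = p_cut_V V E x" if bd: "bounded_degree V E"
  proof -
    have "SV \<subseteq> SE"
      using L2[OF assms(1) bd cV cE] by (auto simp: SE_def SV_def)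
    then show ?thesis using sub1 eE eV by simp
  qed
  show ?thesis using le eq by blast
qed

end
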